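(* Fix $n\ge1$. For $\theta>0$ let $X_{1,n}$ be a random variable on $\{1,\dots,n\}$ with $$P\{X_{1,n}=k\}=\frac\theta n\,\frac{n!}{(n-k)!}\,\frac{\Gamma(\theta+n-k)}{\Gamma(\theta+n)},\quad k=1,\dots,n.$$ Then, as $\theta\to\infty$, the family of laws of $X_{1,n}$ satisfies an LDP on $\{1,\dots,n\}$ with speed $\log\theta$ and rate function $I(k)=k-1$.
   Context: $X_{1,n}$ is the size of the first (oldest) age class in a random sample of size $n$ from a $PD(\theta)$ population; the displayed formula is its law. An LDP with speed $\log\theta$ uses normalization $(\log\theta)^{-1}\log$ as $\theta\to\infty$. *)

theory Defs
  imports "HOL-Analysis.Analysis"
begin

text \<open>Law of the size of the oldest age class X_{1,n} in a sample of size n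
  from a PD(theta) population, given by its probability mass function on {1..n}.\<close>
definition first_age_class_pmf :: "nat \<Rightarrow> real \<Rightarrow> nat \<Rightarrow> real" where
  "first_age_class_pmf n \<theta> k =
     \<theta> / real n * (fact n / fact (n - k)) * (Gamma (\<theta> + real n - real k) / Gamma (\<theta> + real n))"

text \<open>In the discrete
  topology every subset of S is both open and closed, so the LDP upper bound
  (closed sets) and lower bound (open sets) are required for every subset A of S.
  For A empty both bounds are trivial (log 0 = -infinity, inf over empty = +infinity),
  so only nonempty A are listed.  The rate function takes values in [0, infinity);
  lower semicontinuity and compactness of level sets are automatic here.\<close>
definition ldp_finite_discrete ::
  "'a set \<Rightarrow> (real \<Rightarrow> 'a \<Rightarrow> real) \<Rightarrow> (real \<Rightarrow> real) \<Rightarrow> ('a \<Rightarrow> real) \<Rightarrow> bool" where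
  "ldp_finite_discrete S p v I \<longleftrightarrow>
     (\<forall>x\<in>S. 0 \<le> I x) \<and>
     (\<forall>A. A \<subseteq> S \<and> A \<noteq> {} \<longrightarrow>
        Limsup at_top (\<lambda>\<theta>. ereal (ln (\<Sum>x\<in>A. p \<theta> x) / v \<theta>)) \<le> ereal (- Min (I ` A)) \<and>
        Liminf at_top (\<lambda>\<theta>. ereal (ln (\<Sum>x\<in>A. p \<theta> x) / v \<theta>)) \<ge> ereal (- Min (I ` A)))"

end

theory Submission
  imports Defs "HOL-Real_Asymp.Real_Asymp"
begin

lemma pmf_poch:
  assumes "\<theta> > 0" "k \<le> n"
  shows "first_age_class_pmf n \<theta> k = \<theta> / real n * (fact n / fact (n - k)) / pochhammer (\<theta> + real n - real k) k"
proof -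
  have nn: "\<theta> + real n - real k \<notin> \<int>\<^sub>\<le>\<^sub>0"
    using assms by (auto elim!: nonpos_Ints_cases)
  have "pochhammer (\<theta> + real n - real k) k = Gamma (\<theta> + real n) / Gamma (\<theta> + real n - real k)"
    using pochhammer_Gamma[OF nn, of k] by simp
  then show ?thesis unfolding first_age_class_pmf_def by simp
qed

lemma poch_ratio:
  "((\<lambda>\<theta>::real. \<theta> ^ k / pochhammer (\<theta> + c) k) \<longlongrightarrow> 1) at_top"
proof -
  have eq: "\<theta> ^ k / pochhammer (\<theta> + c) k = (\<Prod>i\<in>{0..<k}. \<theta> / (\<theta> + c + real i))" for \<theta>
    by (simp add: pochhammer_prod prod_dividef)
  have "((\<lambda>\<theta>::real. \<Prod>i\<in>{0..<k}. \<theta> / (\<theta> + c + real i)) \<longlongrightarrow> (\<Prod>i\<in>{0..<k}. 1)) at_top"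
  proof (rule tendsto_prod)
    fix i assume "i \<in> {0..<k}"
    show "((\<lambda>\<theta>::real. \<theta> / (\<theta> + c + real i)) \<longlongrightarrow> 1) at_top" by real_asymp
  qed
  then show ?thesis by (simp add: eq)
qed

lemma pmf_lim:
  assumes "1 \<le> k" "k \<le> n"
  shows "((\<lambda>\<theta>. first_age_class_pmf n \<theta> k * \<theta> ^ (k - 1)) \<longlongrightarrow> fact n / (real n * fact (n - k))) at_top"
proof -
  have ev: "eventually (\<lambda>\<theta>. fact n / (real n * fact (n - k)) * (\<theta> ^ k / pochhammer (\<theta> + (real n - real k)) k)
        = first_age_class_pmf n \<theta> k * \<theta> ^ (k - 1)) at_top"
    using eventually_gt_at_top[of "0::real"]
  proof eventually_elim
    case (elim \<theta>)
    have "\<theta> ^ k = \<theta> * \<theta> ^ (k - 1)" using assms by (cases k) auto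
    then show ?case using pmf_poch[OF elim assms(2)] by (simp add: algebra_simps)
  qed
  have "((\<lambda>\<theta>. fact n / (real n * fact (n - k)) * (\<theta> ^ k / pochhammer (\<theta> + (real n - real k)) k))
      \<longlongrightarrow> fact n / (real n * fact (n - k)) * 1) at_top"
    by (intro tendsto_mult tendsto_const poch_ratio)
  then show ?thesis using tendsto_cong[OF ev] by simp
qed

lemma pmf_pos:
  assumes "\<theta> > 0" "1 \<le> k" "k \<le> n"
  shows "first_age_class_pmf n \<theta> k > 0"
proof -
  have "pochhammer (\<theta> + real n - real k) k > 0"
    using assms by (intro pochhammer_pos) auto
  then show ?thesis using pmf_poch[OF assms(1,3)] assms by (auto intro!: divide_pos_pos)
qed

lemma main_lim:
  assumes A: "A \<subseteq> {1..n}" "A \<noteq> {}"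
  shows "((\<lambda>\<theta>. ln (\<Sum>x\<in>A. first_age_class_pmf n \<theta> x) / ln \<theta>) \<longlongrightarrow> - (real (Min A) - 1)) at_top"
proof -
  define m where "m = Min A"
  have fin: "finite A" using A finite_subset by blast
  have mA: "m \<in> A" using fin A by (simp add: m_def)
  have mle: "\<And>k. k \<in> A \<Longrightarrow> m \<le> k" using fin by (simp add: m_def)
  define c where "c k = (fact n / (real n * fact (n - k)) :: real)" for k
  define S where "S \<theta> = (\<Sum>x\<in>A. first_age_class_pmf n \<theta> x)" for \<theta>
  define f where "f \<theta> = (\<Sum>k\<in>A. first_age_class_pmf n \<theta> k * \<theta> ^ (k - 1) * (1 / \<theta>) ^ (k - m))" for \<theta>
  have flim: "(f \<longlongrightarrow> (\<Sum>k\<in>A. c k * 0 ^ (k - m))) at_top"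
    unfolding f_def
  proof (intro tendsto_sum tendsto_mult tendsto_power)
    fix k assume k: "k \<in> A"
    show "((\<lambda>\<theta>. first_age_class_pmf n \<theta> k * \<theta> ^ (k - 1)) \<longlongrightarrow> c k) at_top"
      unfolding c_def using pmf_lim[of k n] k A by auto
    show "((\<lambda>\<theta>::real. 1 / \<theta>) \<longlongrightarrow> 0) at_top" by real_asymp
  qed
  have "(\<Sum>k\<in>A. c k * 0 ^ (k - m)) = (\<Sum>k\<in>A. if k = m then c k else 0)"
    proof (rule sum.cong)
    fix x assume "x \<in> A"
    then have "m \<le> x" by (rule mle)
    then show "c x * 0 ^ (x - m) = (if x = m then c x else 0)"
      by (cases "x = m") (auto simp: power_0_left)
  qed simp
  also have "\<dots> = c m" using fin mA by simp
  finally have flim': "(f \<longlongrightarrow> c m) at_top" using flim by simp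
  have cpos: "c m > 0" unfolding c_def using mA A by auto
  have lnf: "((\<lambda>\<theta>. ln (f \<theta>)) \<longlongrightarrow> ln (c m)) at_top"
    by (rule tendsto_ln[OF flim']) (use cpos in auto)
  have il: "((\<lambda>\<theta>::real. inverse (ln \<theta>)) \<longlongrightarrow> 0) at_top" by real_asymp
  have "((\<lambda>\<theta>. ln (f \<theta>) * inverse (ln \<theta>) - (real m - 1)) \<longlongrightarrow> ln (c m) * 0 - (real m - 1)) at_top"
    by (intro tendsto_diff tendsto_mult lnf il tendsto_const)
  then have L: "((\<lambda>\<theta>. ln (f \<theta>) * inverse (ln \<theta>) - (real m - 1)) \<longlongrightarrow> - (real m - 1)) at_top" by simp
  have ev: "eventually (\<lambda>\<theta>. ln (f \<theta>) * inverse (ln \<theta>) - (real m - 1) = ln (S \<theta>) / ln \<theta>) at_top"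
    using eventually_gt_at_top[of "1::real"]
  proof eventually_elim
    case (elim \<theta>)
    have t0: "\<theta> > 0" using elim by simp
    have pw: "\<theta> ^ (k - 1) * (1 / \<theta>) ^ (k - m) = \<theta> ^ (m - 1)" if "k \<in> A" for k
    proof -
      have k1: "m \<ge> 1" using mA A by auto
      have "k - 1 = (m - 1) + (k - m)" using mle[OF that] k1 by simp
      then have "\<theta> ^ (k - 1) * (1 / \<theta>) ^ (k - m) = \<theta> ^ (m - 1) * (\<theta> * (1 / \<theta>)) ^ (k - m)"
        by (simp only: power_add power_mult_distrib mult.assoc)
      also have "\<theta> * (1 / \<theta>) = 1" using t0 by simp
      finally show ?thesis by simp
    qed
    have fS: "f \<theta> = S \<theta> * \<theta> ^ (m - 1)"
      unfolding f_def S_def sum_distrib_right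
      proof (rule sum.cong)
        fix x assume "x \<in> A"
        then show "first_age_class_pmf n \<theta> x * \<theta> ^ (x - 1) * (1 / \<theta>) ^ (x - m) = first_age_class_pmf n \<theta> x * \<theta> ^ (m - 1)"
          using pw[of x] by (simp only: mult.assoc)
      qed simp
    have Spos: "S \<theta> > 0" unfolding S_def
      proof (rule sum_pos2[where i=m])
      show "finite A" by (rule fin)
      show "m \<in> A" by (rule mA)
      show "0 < first_age_class_pmf n \<theta> m" using mA A by (intro pmf_pos[OF t0]) auto
      fix i assume "i \<in> A"
      then have "0 < first_age_class_pmf n \<theta> i" using A by (intro pmf_pos[OF t0]) auto
      then show "0 \<le> first_age_class_pmf n \<theta> i" by simp
    qed
    have m1: "m \<ge> 1" using mA A by auto
    have "ln (f \<theta>) = ln (S \<theta>) + (real m - 1) * ln \<theta>"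
    proof -
      have r: "real (m - 1) = real m - 1" using m1 by (simp add: of_nat_diff)
      have "ln (f \<theta>) = ln (S \<theta>) + ln (\<theta> ^ (m - 1))"
        using Spos t0 by (simp add: fS ln_mult)
      also have "ln (\<theta> ^ (m - 1)) = real (m - 1) * ln \<theta>" using t0 by (simp add: ln_realpow)
      finally show ?thesis by (simp only: r)
    qed
    moreover have "ln \<theta> > 0" using elim by simp
    ultimately show ?case
    proof -
      assume e: "ln (f \<theta>) = ln (S \<theta>) + (real m - 1) * ln \<theta>" and p: "ln \<theta> > 0"
      have "ln (f \<theta>) * inverse (ln \<theta>) = ln (S \<theta>) / ln \<theta> + (real m - 1)"
        unfolding e using p by (simp add: divide_inverse distrib_right)
      then show ?thesis by simp
    qed
  qed
  show ?thesis using tendsto_cong[OF ev] L by (simp add: S_def m_def)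
qed

theorem theorem4p6:
  fixes n :: nat
  assumes "n \<ge> 1"
  shows "ldp_finite_discrete {1..n} (first_age_class_pmf n) (\<lambda>\<theta>. ln \<theta>) (\<lambda>k. real k - 1)"
  unfolding ldp_finite_discrete_def
proof (intro conjI allI impI)
  show "\<forall>x\<in>{1..n}. 0 \<le> real x - 1" by auto
next
  fix A :: "nat set" assume A: "A \<subseteq> {1..n} \<and> A \<noteq> {}"
  have fin: "finite A" using A finite_subset by blast
  have MI: "Min ((\<lambda>k. real k - 1) ` A) = real (Min A) - 1"
  proof (rule Min_eqI)
    show "finite ((\<lambda>k. real k - 1) ` A)" using fin by simp
    show "\<And>y. y \<in> (\<lambda>k. real k - 1) ` A \<Longrightarrow> real (Min A) - 1 \<le> y" using fin by auto
    show "real (Min A) - 1 \<in> (\<lambda>k. real k - 1) ` A" using fin A by auto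
  qed
  have L: "((\<lambda>\<theta>. ereal (ln (\<Sum>x\<in>A. first_age_class_pmf n \<theta> x) / ln \<theta>)) \<longlongrightarrow> ereal (- (real (Min A) - 1))) at_top"
    using main_lim[of A n] A by (simp add: tendsto_ereal)
  show "Limsup at_top (\<lambda>\<theta>. ereal (ln (\<Sum>x\<in>A. first_age_class_pmf n \<theta> x) / ln \<theta>)) \<le> ereal (- Min ((\<lambda>k. real k - 1) ` A))"
    using lim_imp_Limsup[OF _ L] MI by simp
  show "Liminf at_top (\<lambda>\<theta>. ereal (ln (\<Sum>x\<in>A. first_age_class_pmf n \<theta> x) / ln \<theta>)) \<ge> ereal (- Min ((\<lambda>k. real k - 1) ` A))"
    using lim_imp_Liminf[OF _ L] MI by simp
qed

end
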